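(* Let $P$ be a connected shrub on a finite set $I$ with at least two elements. Let $S$ be the set of vertices of height $1$ that cover every vertex of height $0$. In the graph obtained from the underlying graph of $P$ by removing all edges between elements of $S$ and vertices of height $0$, no vertex of $S$ lies in the same connected component as a vertex of height $0$.
   Context: A shrub $P$ on a finite set $I$ is a set $E$ of edges (unordered pairs $\{i,j\}$ of distinct elements of $I$) together with a height function $h_P:I\to\mathbb{N}$. Say that $j$ covers $i$ if $\{i,j\}\in E$ and $h_P(j)=h_P(i)+1$. The axioms are: (1) if $\{i,j\}\in E$ then $h_P(i)=h_P(j)\pm 1$; (2) if $h_P(j)>0$ then there is an edge $\{i,j\}$ with $h_P(i)=h_P(j)-1$; (3) there are no four distinct vertices $a,b,c,d$ such that $a$ covers $b$ and $c$, $c$ covers $d$, and $\{b,d\}\notin E$; (4) there are no five distinct vertices $a,b,c,d,e$ such that $a$ covers $c$ and $d$, $b$ covers $d$ and $e$, $\{a,e\}\notin E$ and $\{b,c\}\notin E$. A shrub is connected if its underlying graph $(I,E)$ is connected. *)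

theory Defs
  imports Main
begin

text \<open>Edges are unordered pairs of distinct elements of I, represented as 2-element sets.\<close>

definition covers :: "'a set set \<Rightarrow> ('a \<Rightarrow> nat) \<Rightarrow> 'a \<Rightarrow> 'a \<Rightarrow> bool" where
  "covers E h j i \<longleftrightarrow> {i, j} \<in> E \<and> h j = h i + 1"

definition shrub :: "'a set \<Rightarrow> 'a set set \<Rightarrow> ('a \<Rightarrow> nat) \<Rightarrow> bool" where
  "shrub I E h \<longleftrightarrow>
     finite I \<and>
     (\<forall>e\<in>E. \<exists>i j. e = {i, j} \<and> i \<noteq> j \<and> i \<in> I \<and> j \<in> I) \<and>
     (\<forall>i\<in>I. \<forall>j\<in>I. {i, j} \<in> E \<longrightarrow> h i = h j + 1 \<or> h j = h i + 1) \<and>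
     (\<forall>j\<in>I. h j > 0 \<longrightarrow> (\<exists>i\<in>I. {i, j} \<in> E \<and> h i + 1 = h j)) \<and>
     \<not> (\<exists>a\<in>I. \<exists>b\<in>I. \<exists>c\<in>I. \<exists>d\<in>I. distinct [a, b, c, d] \<and>
          covers E h a b \<and> covers E h a c \<and> covers E h c d \<and> {b, d} \<notin> E) \<and>
     \<not> (\<exists>a\<in>I. \<exists>b\<in>I. \<exists>c\<in>I. \<exists>d\<in>I. \<exists>e\<in>I. distinct [a, b, c, d, e] \<and>
          covers E h a c \<and> covers E h a d \<and> covers E h b d \<and> covers E h b e \<and>
          {a, e} \<notin> E \<and> {b, c} \<notin> E)"

definition adj :: "'a set \<Rightarrow> 'a set set \<Rightarrow> ('a \<times> 'a) set" where
  "adj I E = {(x, y). x \<in> I \<and> y \<in> I \<and> x \<noteq> y \<and> {x, y} \<in> E}"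

definition connected_graph :: "'a set \<Rightarrow> 'a set set \<Rightarrow> bool" where
  "connected_graph I E \<longleftrightarrow> (\<forall>x\<in>I. \<forall>y\<in>I. (x, y) \<in> (adj I E)\<^sup>*)"

end

theory Submission
  imports Defs
begin

lemma sh_ax1:
  assumes "shrub I E h" "i \<in> I" "j \<in> I" "{i, j} \<in> E"
  shows "h i = h j + 1 \<or> h j = h i + 1"
proof -
  have "\<forall>i\<in>I. \<forall>j\<in>I. {i, j} \<in> E \<longrightarrow> h i = h j + 1 \<or> h j = h i + 1"
    using assms(1) unfolding shrub_def apply (elim conjE) apply assumption done
  then show ?thesis using assms(2-4) by blast
qed

lemma sh_ax2: "shrub I E h \<Longrightarrow> j \<in> I \<Longrightarrow> h j > 0 \<Longrightarrow> \<exists>i\<in>I. {i, j} \<in> E \<and> h i + 1 = h j"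
  unfolding shrub_def by (elim conjE) (drule bspec, assumption+, simp)

lemma sh_ax3:
  assumes "shrub I E h" "a\<in>I" "b\<in>I" "c\<in>I" "d\<in>I" "distinct [a, b, c, d]"
     "covers E h a b" "covers E h a c" "covers E h c d"
  shows "{b, d} \<in> E"
proof (rule ccontr)
  assume n: "{b, d} \<notin> E"
  have "\<not> (\<exists>a\<in>I. \<exists>b\<in>I. \<exists>c\<in>I. \<exists>d\<in>I. distinct [a, b, c, d] \<and>
          covers E h a b \<and> covers E h a c \<and> covers E h c d \<and> {b, d} \<notin> E)"
    using assms(1) unfolding shrub_def apply (elim conjE) apply assumption done
  moreover have "\<exists>a\<in>I. \<exists>b\<in>I. \<exists>c\<in>I. \<exists>d\<in>I. distinct [a, b, c, d] \<and>
          covers E h a b \<and> covers E h a c \<and> covers E h c d \<and> {b, d} \<notin> E"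
    apply (rule bexI[OF _ assms(2)], rule bexI[OF _ assms(3)], rule bexI[OF _ assms(4)], rule bexI[OF _ assms(5)])
    using assms(6-9) n by simp
  ultimately show False by contradiction
qed

definition dn :: "'a set \<Rightarrow> 'a set set \<Rightarrow> ('a \<Rightarrow> nat) \<Rightarrow> ('a \<times> 'a) set" where
  "dn I E h = {(x, y). x \<in> I \<and> y \<in> I \<and> covers E h x y}"

lemma dn_height:
  assumes "(u, w) \<in> (dn I E h)\<^sup>*"
  shows "h w \<le> h u \<and> (h w = h u \<longrightarrow> u = w)"
  using assms
proof (induction rule: rtrancl_induct)
  case base then show ?case by simp
next
  case (step y z) then show ?case by (auto simp: dn_def covers_def)
qed

definition QQ :: "'a set \<Rightarrow> 'a set set \<Rightarrow> ('a \<Rightarrow> nat) \<Rightarrow> 'a set \<Rightarrow> 'a \<Rightarrow> bool" where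
  "QQ I E h S u \<longleftrightarrow> (\<forall>w. (u, w) \<in> (dn I E h)\<^sup>* \<longrightarrow> h w = 1 \<longrightarrow> w \<in> S)"

lemma QQ_step:
  assumes "QQ I E h S u" "x \<in> I" "u \<in> I" "covers E h u x"
  shows "QQ I E h S x"
  unfolding QQ_def
proof (intro allI impI)
  fix w assume w: "(x, w) \<in> (dn I E h)\<^sup>*" "h w = 1"
  have "(u, x) \<in> dn I E h" using assms(2-4) by (simp add: dn_def)
  then have "(u, w) \<in> (dn I E h)\<^sup>*" using w(1) by (rule converse_rtrancl_into_rtrancl)
  then show "w \<in> S" using assms(1) w(2) unfolding QQ_def by blast
qed

lemma QQ_up:
  assumes "\<And>w. w \<in> I \<Longrightarrow> covers E h y w \<Longrightarrow> QQ I E h S w" "h y \<ge> 2" "y \<in> I"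
  shows "QQ I E h S y"
  unfolding QQ_def
proof (intro allI impI)
  fix z assume z: "(y, z) \<in> (dn I E h)\<^sup>*" "h z = 1"
  then have "y \<noteq> z" using assms by auto
  then obtain w where "(y, w) \<in> dn I E h" "(w, z) \<in> (dn I E h)\<^sup>*"
    using z by (metis converse_rtranclE)
  then show "z \<in> S" using assms(1) z by (auto simp: dn_def QQ_def)
qed

lemma keyL:
  assumes sh: "shrub I E h"
    and Sdef: "S = {s \<in> I. h s = 1 \<and> (\<forall>v\<in>I. h v = 0 \<longrightarrow> covers E h s v)}"
  shows "\<forall>x u w. h u = k \<longrightarrow> x \<in> I \<longrightarrow> u \<in> I \<longrightarrow> w \<in> I \<longrightarrow> covers E h x u \<longrightarrow> covers E h x w
     \<longrightarrow> k \<ge> 1 \<longrightarrow> QQ I E h S u \<longrightarrow> QQ I E h S w"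
proof (induction k rule: nat_less_induct)
  case (1 k)
  show ?case
  proof (intro allI impI)
  fix x u w assume hu: "h u = k" and xI: "x \<in> I" and uI: "u \<in> I" and wI: "w \<in> I"
    and cxu: "covers E h x u" and cxw: "covers E h x w" and k1: "k \<ge> 1" and Qu: "QQ I E h S u"
  have hx: "h x = k + 1" using cxu hu by (simp add: covers_def)
  have hw: "h w = k" using cxw hx by (simp add: covers_def)
  show "QQ I E h S w"
  proof (cases "w = u")
    case True then show ?thesis using Qu by simp
  next
    case wu: False
    show ?thesis
    proof (cases "k = 1")
      case True
      have uS: "u \<in> S" using Qu hu True unfolding QQ_def by blast
      have "w \<in> S"
        unfolding Sdef
      proof (intro CollectI conjI ballI impI)
        fix v assume v: "v \<in> I" "h v = 0"
        have cuv: "covers E h u v" using uS v Sdef by blast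
        have "distinct [x, w, u, v]" using wu True v hw hx hu by auto
        then have "{w, v} \<in> E" using sh_ax3[OF sh xI wI uI v(1) _ cxw cxu cuv] by blast
        then show "covers E h w v" using hw v True by (simp add: covers_def insert_commute)
      qed (use wI hw True in auto)
      show ?thesis unfolding QQ_def
      proof (intro allI impI)
        fix z assume "(w, z) \<in> (dn I E h)\<^sup>*" "h z = 1"
        then have "w = z" using dn_height[of w z] hw True by auto
        then show "z \<in> S" using \<open>w \<in> S\<close> by simp
      qed
    next
      case False
      then have k2: "k \<ge> 2" using k1 by linarith
      obtain d where d: "d \<in> I" "{d, u} \<in> E" "h d + 1 = h u"
        using sh_ax2[OF sh uI] hu k1 by auto
      have cud: "covers E h u d" using d by (simp add: covers_def insert_commute)
      have "distinct [x, w, u, d]" using wu d hw hx hu by auto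
      then have "{w, d} \<in> E" using sh_ax3[OF sh xI wI uI d(1) _ cxw cxu cud] by blast
      then have cwd: "covers E h w d" using hw d hu by (simp add: covers_def insert_commute)
      have Qd: "QQ I E h S d" using QQ_step[OF Qu d(1) uI cud] .
      have IH: "\<forall>x u w. h u = h d \<longrightarrow> x \<in> I \<longrightarrow> u \<in> I \<longrightarrow> w \<in> I \<longrightarrow> covers E h x u \<longrightarrow> covers E h x w
     \<longrightarrow> h d \<ge> 1 \<longrightarrow> QQ I E h S u \<longrightarrow> QQ I E h S w"
        using 1[rule_format, of "h d"] d(3) hu by simp
      have hd1: "h d \<ge> 1" using d(3) hu k2 by linarith
      show ?thesis
      proof (rule QQ_up)
        fix w' assume w': "w' \<in> I" "covers E h w w'"
        show "QQ I E h S w'"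
          using IH[rule_format, OF refl wI d(1) w'(1) cwd w'(2) hd1 Qd] .
      qed (use hw k2 wI in auto)
    qed
  qed
  qed
qed

theorem mainTheorem2:
  fixes I :: "'a set" and E :: "'a set set" and h :: "'a \<Rightarrow> nat"
  assumes "shrub I E h"
    and "connected_graph I E"
    and "card I \<ge> 2"
  defines "S \<equiv> {s \<in> I. h s = 1 \<and> (\<forall>v\<in>I. h v = 0 \<longrightarrow> covers E h s v)}"
  defines "E' \<equiv> E - {{s, v} | s v. s \<in> S \<and> v \<in> I \<and> h v = 0}"
  shows "\<forall>s\<in>S. \<forall>v\<in>I. h v = 0 \<longrightarrow> (s, v) \<notin> (adj I E')\<^sup>*"
proof (intro ballI impI)
  fix s v assume s: "s \<in> S" and v: "v \<in> I" "h v = 0"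
  have sh: "shrub I E h" by fact
  note L = keyL[OF sh meta_eq_to_obj_eq[OF S_def], rule_format]
  have inv: "u \<in> I \<and> h u \<ge> 1 \<and> QQ I E h S u" if "(s, u) \<in> (adj I E')\<^sup>*" for u
    using that
  proof (induction rule: rtrancl_induct)
    case base
    have "QQ I E h S s" unfolding QQ_def
    proof (intro allI impI)
      fix z assume "(s, z) \<in> (dn I E h)\<^sup>*" "h z = 1"
      moreover have "h s = 1" using s unfolding S_def by blast
      ultimately have "s = z" using dn_height[of s z] by auto
      then show "z \<in> S" using s by simp
    qed
    then show ?case using s S_def by auto
  next
    case (step u y)
    have y: "y \<in> I" "{u, y} \<in> E'" using step by (auto simp: adj_def)
    have uyE: "{u, y} \<in> E" using y(2) unfolding E'_def by (rule DiffD1)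
    have hh: "h u = h y + 1 \<or> h y = h u + 1" using sh_ax1[OF sh, of u y] step y uyE by auto
    show ?case
    proof (cases "h y = h u + 1")
      case True
      have cyu: "covers E h y u" using True uyE by (simp add: covers_def)
      have "QQ I E h S y"
      proof (rule QQ_up)
        fix w assume "w \<in> I" "covers E h y w"
        then show "QQ I E h S w" using L[of u "h u" y w] step y cyu by auto
      qed (use True step y in auto)
      then show ?thesis using y True by auto
    next
      case False
      then have hu: "h u = h y + 1" using hh by auto
      have cuy: "covers E h u y" using hu uyE by (simp add: covers_def insert_commute)
      show ?thesis
      proof (cases "h u = 1")
        case True
        then have "u \<in> S" using step unfolding QQ_def by auto
        moreover have "h y = 0" using True hu by simp
        ultimately have "{u, y} \<in> {{s, v} | s v. s \<in> S \<and> v \<in> I \<and> h v = 0}"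
          using y(1) by blast
        then show ?thesis using y(2) unfolding E'_def by (meson DiffD2)
      next
        case False
        then show ?thesis using hu y QQ_step[OF _ y(1) _ cuy] step by auto
      qed
    qed
  qed
  show "(s, v) \<notin> (adj I E')\<^sup>*" using inv v by fastforce
qed

end
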